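(* Let $G=(V,E)$ be a finite graph with edge weights $\mathbf{v}=(v_e)_{e\in E}$, let $q$ be an indeterminate, and let $i,j\in V$ with $i\ne j$. Then \[ Z_G(q,\mathbf{v})=\sum_{\substack{W\subseteq V\\ W\ni i,\ W\not\ni j}}\Bigl[q-1+\prod_{e\in E(W,j)}(1+v_e)\Bigr]C_{G[W]}(\mathbf{v})\,Z_{G[V\setminus W]}(q,\mathbf{v}), \] where $E(W,j)$ denotes the set of edges with one endpoint in $W$ and the other endpoint at $j$. In particular, \[ C_G(\mathbf{v})=\sum_{\substack{W\subseteq V\\ W\ni i,\ W\not\ni j}}\Bigl[\prod_{e\in E(W,j)}(1+v_e)-1\Bigr]C_{G[W]}(\mathbf{v})\,C_{G[V\setminus W]}(\mathbf{v}). \]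
   Context: Graphs may have loops and multiple edges. For a finite graph $H$: $Z_H(q,\mathbf{v})=\sum_{A\subseteq E(H)}q^{k(A)}\prod_{e\in A}v_e$ with $k(A)$ the number of connected components of $(V(H),A)$, and $C_H(\mathbf{v})=\sum_{A\subseteq E(H),\,k(A)=1}\prod_{e\in A}v_e$. $G[W]$ is the induced subgraph on $W$ (edges weighted as in $G$). *)

theory Defs
  imports Main
begin

text \<open>A finite multigraph (loops and multiple edges allowed) is given by a vertex set V,
an edge set E and an endpoint map ends: each edge e has a set ends e of one (loop)
or two endpoints in V.\<close>

definition multigraph :: "'v set \<Rightarrow> 'e set \<Rightarrow> ('e \<Rightarrow> 'v set) \<Rightarrow> bool" where
  "multigraph V E ends \<longleftrightarrow> finite V \<and> finite E \<and>
     (\<forall>e\<in>E. ends e \<subseteq> V \<and> ends e \<noteq> {} \<and> card (ends e) \<le> 2)"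

definition adj_rel :: "'v set \<Rightarrow> ('e \<Rightarrow> 'v set) \<Rightarrow> 'e set \<Rightarrow> ('v \<times> 'v) set" where
  "adj_rel V ends A = {(x, y). x \<in> V \<and> y \<in> V \<and> (\<exists>e\<in>A. x \<in> ends e \<and> y \<in> ends e)}"

definition ncomp :: "'v set \<Rightarrow> ('e \<Rightarrow> 'v set) \<Rightarrow> 'e set \<Rightarrow> nat" where
  "ncomp V ends A = card (V // ((adj_rel V ends A)\<^sup>* \<inter> (V \<times> V)))"

definition Zpoly :: "'v set \<Rightarrow> 'e set \<Rightarrow> ('e \<Rightarrow> 'v set) \<Rightarrow> 'a::comm_ring_1 \<Rightarrow> ('e \<Rightarrow> 'a) \<Rightarrow> 'a" where
  "Zpoly V E ends q w = (\<Sum>A\<in>Pow E. q ^ ncomp V ends A * (\<Prod>e\<in>A. w e))"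

definition Cpoly :: "'v set \<Rightarrow> 'e set \<Rightarrow> ('e \<Rightarrow> 'v set) \<Rightarrow> ('e \<Rightarrow> 'a::comm_ring_1) \<Rightarrow> 'a" where
  "Cpoly V E ends w = (\<Sum>A\<in>{A\<in>Pow E. ncomp V ends A = 1}. \<Prod>e\<in>A. w e)"

definition ind_edges :: "'e set \<Rightarrow> ('e \<Rightarrow> 'v set) \<Rightarrow> 'v set \<Rightarrow> 'e set" where
  "ind_edges E ends W = {e\<in>E. ends e \<subseteq> W}"

definition cross_edges :: "'e set \<Rightarrow> ('e \<Rightarrow> 'v set) \<Rightarrow> 'v set \<Rightarrow> 'v \<Rightarrow> 'e set" where
  "cross_edges E ends W j = {e\<in>E. \<exists>w\<in>W. ends e = {w, j}}"

end

theory Submission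
  imports Defs
begin



lemma adj_rel_sym: "sym (adj_rel V ends A)"
  unfolding adj_rel_def sym_def by auto

lemma adj_rel_sub: "adj_rel V ends A \<subseteq> V \<times> V"
  unfolding adj_rel_def by auto

lemma adj_rel_mono: "V \<subseteq> V' \<Longrightarrow> A \<subseteq> A' \<Longrightarrow> adj_rel V ends A \<subseteq> adj_rel V' ends A'"
  unfolding adj_rel_def by blast

lemma adj_relI: "x \<in> V \<Longrightarrow> y \<in> V \<Longrightarrow> e \<in> A \<Longrightarrow> x \<in> ends e \<Longrightarrow> y \<in> ends e \<Longrightarrow> (x,y) \<in> adj_rel V ends A"
  unfolding adj_rel_def by blast

lemma adj_relE: "(x,y) \<in> adj_rel V ends A \<Longrightarrow> (\<And>e. x \<in> V \<Longrightarrow> y \<in> V \<Longrightarrow> e \<in> A \<Longrightarrow> x \<in> ends e \<Longrightarrow> y \<in> ends e \<Longrightarrow> P) \<Longrightarrow> P"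
  unfolding adj_rel_def by blast

lemma rtr_sym: "(x,y) \<in> (adj_rel V ends A)\<^sup>* \<Longrightarrow> (y,x) \<in> (adj_rel V ends A)\<^sup>*"
  using sym_rtrancl[OF adj_rel_sym[of V ends A]] unfolding sym_def by blast

definition compr where "compr V ends A = (adj_rel V ends A)\<^sup>* \<inter> V \<times> V"

lemma equiv_compr: "equiv V (compr V ends A)"
proof (rule equivI)
  show "compr V ends A \<subseteq> V \<times> V" unfolding compr_def by auto
  show "refl_on V (compr V ends A)" unfolding compr_def refl_on_def by auto
  show "sym (compr V ends A)"
  proof (rule symI)
    fix x y assume "(x,y) \<in> compr V ends A"
    thus "(y,x) \<in> compr V ends A" unfolding compr_def using rtr_sym[of x y V ends A] by simp
  qed
  show "trans (compr V ends A)" unfolding compr_def trans_def by auto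
qed

lemma ncomp_img: "ncomp V ends A = card ((\<lambda>x. compr V ends A `` {x}) ` V)"
  unfolding ncomp_def compr_def quotient_def UNION_singleton_eq_range by simp

lemma class_eq: "x \<in> V \<Longrightarrow> y \<in> V \<Longrightarrow>
   (compr V ends A `` {x} = compr V ends A `` {y}) \<longleftrightarrow> (x,y) \<in> (adj_rel V ends A)\<^sup>*"
  using eq_equiv_class_iff[OF equiv_compr, of x V y ends A] unfolding compr_def by auto

lemma img_single: "f ` V = {c} \<Longrightarrow> z \<in> V \<Longrightarrow> f z = c" by auto

lemma img_const: "\<forall>z\<in>V. f z = c \<Longrightarrow> x \<in> V \<Longrightarrow> f ` V = {c}" by auto

lemma ncomp_one: assumes "x \<in> V"
  shows "ncomp V ends A = 1 \<longleftrightarrow> (\<forall>y\<in>V. (x,y) \<in> (adj_rel V ends A)\<^sup>*)"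
proof
  assume "ncomp V ends A = 1"
  then obtain c where c: "(\<lambda>x. compr V ends A `` {x}) ` V = {c}"
    unfolding ncomp_img by (auto simp: card_Suc_eq)
  show "\<forall>y\<in>V. (x,y) \<in> (adj_rel V ends A)\<^sup>*"
  proof
    fix y assume y: "y \<in> V"
    have "compr V ends A `` {x} = compr V ends A `` {y}"
      using img_single[OF c assms] img_single[OF c y] by (rule trans[OF _ sym])
    thus "(x,y) \<in> (adj_rel V ends A)\<^sup>*" using class_eq[OF assms y, of ends A] by simp
  qed
next
  assume h: "\<forall>y\<in>V. (x,y) \<in> (adj_rel V ends A)\<^sup>*"
  have "\<forall>z\<in>V. compr V ends A `` {z} = compr V ends A `` {x}"
  proof
    fix z assume z: "z \<in> V"
    have "(z,x) \<in> (adj_rel V ends A)\<^sup>*" using rtr_sym[OF h[rule_format, OF z]] .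
    thus "compr V ends A `` {z} = compr V ends A `` {x}" using class_eq[OF z assms, of ends A] by simp
  qed
  hence "(\<lambda>x. compr V ends A `` {x}) ` V = {compr V ends A `` {x}}"
    by (rule img_const[OF _ assms])
  thus "ncomp V ends A = 1" unfolding ncomp_img by simp
qed

lemma card_img_eq: assumes "\<forall>u\<in>U. \<forall>u'\<in>U. f u = f u' \<longleftrightarrow> g u = g u'"
  shows "card (f ` U) = card (g ` U)"
proof -
  define h where "h y = g (inv_into U f y)" for y
  have hf: "h (f u) = g u" if "u \<in> U" for u
  proof -
    have "inv_into U f (f u) \<in> U" "f (inv_into U f (f u)) = f u"
      using that by (auto intro: inv_into_into f_inv_into_f)
    thus ?thesis unfolding h_def using assms that by blast
  qed
  have "bij_betw h (f ` U) (g ` U)"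
    unfolding bij_betw_def inj_on_def using hf assms by (auto simp: image_iff)
  thus ?thesis by (rule bij_betw_same_card)
qed

lemma ncomp_pos: "finite V \<Longrightarrow> V \<noteq> {} \<Longrightarrow> ncomp V ends A \<ge> 1"
proof -
  assume "finite V" "V \<noteq> {}"
  hence "card ((\<lambda>x. compr V ends A `` {x}) ` V) > 0" by (intro card_gt_0_iff[THEN iffD2]) auto
  thus ?thesis unfolding ncomp_img by simp
qed




lemma mg_edge: "multigraph V E ends \<Longrightarrow> e \<in> E \<Longrightarrow>
   ends e \<subseteq> V \<and> ends e \<noteq> {} \<and> finite (ends e) \<and> card (ends e) \<le> 2"
  unfolding multigraph_def using finite_subset by blast

lemma two_ends: "finite S \<Longrightarrow> card S \<le> 2 \<Longrightarrow> x\<in>S \<Longrightarrow> y\<in>S \<Longrightarrow> x\<noteq>y \<Longrightarrow> S = {x,y}"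
  by (metis card_2_iff card_seteq empty_subsetI insert_subset)

lemma inv1:
  assumes W: "W \<subseteq> V" and jU: "j \<in> V" "j \<notin> W"
    and A1: "A1 \<subseteq> ind_edges E ends W" and A2: "A2 \<subseteq> cross_edges E ends W j"
    and A3: "A3 \<subseteq> ind_edges E ends (V-W)"
    and u: "u \<in> V - W" and p: "(u,y) \<in> (adj_rel V ends (A1 \<union> A2 \<union> A3))\<^sup>*"
  shows "(y \<in> V - W \<longrightarrow> (u,y) \<in> (adj_rel (V-W) ends A3)\<^sup>*) \<and>
         (y \<in> W \<longrightarrow> (u,j) \<in> (adj_rel (V-W) ends A3)\<^sup>*) \<and> (A2 = {} \<longrightarrow> y \<in> V - W)"
  using p
proof (induction rule: rtrancl_induct)
  case base
  then show ?case using u by auto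
next
  case (step y z)
  from step.hyps(2) obtain e where yz: "y \<in> V" "z \<in> V" "e \<in> A1 \<union> A2 \<union> A3" "y \<in> ends e" "z \<in> ends e"
    by (rule adj_relE)
  show ?case
  proof -
    { assume e: "e \<in> A1"
      hence "ends e \<subseteq> W" using A1 unfolding ind_edges_def by auto
      hence ?thesis using step.IH yz by auto }
    moreover
    { assume e: "e \<in> A3"
      hence "ends e \<subseteq> V - W" using A3 unfolding ind_edges_def by auto
      hence yzU: "y \<in> V - W" "z \<in> V - W" using yz by auto
      hence "(y,z) \<in> adj_rel (V-W) ends A3" using yz e by (blast intro: adj_relI)
      hence ?thesis using step.IH yzU by auto }
    moreover
    { assume e: "e \<in> A2"
      then obtain w0 where w0: "w0 \<in> W" "ends e = {w0, j}" using A2 unfolding cross_edges_def by auto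
      have "(u,j) \<in> (adj_rel (V-W) ends A3)\<^sup>*"
        using step.IH yz w0 jU by auto
      hence ?thesis using w0 yz e by auto }
    ultimately show ?thesis using yz by blast
  qed
qed

lemma ncomp_split:
  assumes mg: "multigraph V E ends" and W: "W \<subseteq> V" and jU: "j \<in> V" "j \<notin> W" and i: "i \<in> W"
    and A1: "A1 \<subseteq> ind_edges E ends W" and conn: "\<forall>y\<in>W. (i,y) \<in> (adj_rel W ends A1)\<^sup>*"
    and A2: "A2 \<subseteq> cross_edges E ends W j"
    and A3: "A3 \<subseteq> ind_edges E ends (V-W)"
  shows "ncomp V ends (A1 \<union> A2 \<union> A3) = ncomp (V-W) ends A3 + (if A2 = {} then 1 else 0)"
proof -
  let ?A = "A1 \<union> A2 \<union> A3"
  let ?R = "adj_rel V ends ?A"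
  let ?RU = "adj_rel (V-W) ends A3"
  let ?cl = "\<lambda>x. compr V ends ?A `` {x}"
  let ?clU = "\<lambda>x. compr (V-W) ends A3 `` {x}"
  have fin: "finite V" using mg unfolding multigraph_def by auto
  have iV: "i \<in> V" using i W by auto
  have Wi: "(w,i) \<in> ?R\<^sup>*" if "w \<in> W" for w
  proof -
    have "adj_rel W ends A1 \<subseteq> ?R" by (rule adj_rel_mono) (use W in auto)
    hence "(i,w) \<in> ?R\<^sup>*" using conn that rtrancl_mono by blast
    thus ?thesis by (rule rtr_sym)
  qed
  have UU: "(u,u') \<in> ?R\<^sup>* \<longleftrightarrow> (u,u') \<in> ?RU\<^sup>*" if "u \<in> V - W" "u' \<in> V - W" for u u'
  proof
    assume "(u,u') \<in> ?R\<^sup>*"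
    thus "(u,u') \<in> ?RU\<^sup>*" using inv1[OF W jU A1 A2 A3 that(1)] that by blast
  next
    have "?RU \<subseteq> ?R" by (rule adj_rel_mono) auto
    thus "(u,u') \<in> ?RU\<^sup>* \<Longrightarrow> (u,u') \<in> ?R\<^sup>*" using rtrancl_mono by blast
  qed
  have cardU: "card (?cl ` (V-W)) = ncomp (V-W) ends A3"
    unfolding ncomp_img
  proof (rule card_img_eq, intro ballI)
    fix u u' assume "u \<in> V - W" "u' \<in> V - W"
    thus "(?cl u = ?cl u') = (?clU u = ?clU u')"
      using class_eq[of u V u' ends ?A] class_eq[of u "V-W" u' ends A3] UU by auto
  qed
  have Vsplit: "?cl ` V = ?cl ` W \<union> ?cl ` (V-W)" using W by auto
  show ?thesis
  proof (cases "A2 = {}")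
    case True
    have eq: "\<forall>w\<in>W. ?cl w = ?cl i"
      using class_eq[OF _ iV] Wi W by blast
    have "?cl ` W = {?cl i}" using eq i by blast
    moreover have "?cl i \<notin> ?cl ` (V-W)"
    proof
      assume "?cl i \<in> ?cl ` (V-W)"
      then obtain u where u: "u \<in> V - W" "?cl i = ?cl u" by auto
      hence "(u,i) \<in> ?R\<^sup>*" using class_eq[OF _ iV, of u ends ?A] by auto
      thus False using inv1[OF W jU A1 A2 A3 u(1)] True i by blast
    qed
    ultimately have "ncomp V ends ?A = Suc (card (?cl ` (V-W)))"
      unfolding ncomp_img Vsplit using fin by simp
    thus ?thesis using cardU True by simp
  next
    case False
    then obtain e where e: "e \<in> A2" by auto
    then obtain w0 where w0: "w0 \<in> W" "ends e = {w0, j}" using A2 unfolding cross_edges_def by auto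
    have "(w0,j) \<in> ?R" using e w0 W jU by (intro adj_relI[of _ _ _ e]) auto
    hence Wj: "(w,j) \<in> ?R\<^sup>*" if "w \<in> W" for w
      using Wi[OF that] rtr_sym[OF Wi[OF w0(1)]]
      by (meson rtrancl.rtrancl_into_rtrancl rtrancl_trans)
    have "?cl ` W \<subseteq> ?cl ` (V-W)"
    proof
      fix c assume "c \<in> ?cl ` W"
      then obtain w where w: "w \<in> W" "c = ?cl w" by auto
      have "?cl w = ?cl j" using class_eq[of w V j ends ?A] w W jU Wj by auto
      thus "c \<in> ?cl ` (V-W)" using w jU by auto
    qed
    hence "?cl ` V = ?cl ` (V-W)" using Vsplit by auto
    thus ?thesis using cardU False unfolding ncomp_img by simp
  qed
qed




lemma RA_mem: assumes "i \<in> V" "i \<noteq> j"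
  shows "(adj_rel (V-{j}) ends A)\<^sup>* `` {i} \<in> {W. W \<subseteq> V \<and> i \<in> W \<and> j \<notin> W}"
proof -
  have "y \<in> V - {j}" if "(i,y) \<in> (adj_rel (V-{j}) ends A)\<^sup>*" for y
    using that
  proof (induction rule: rtrancl_induct)
    case base then show ?case using assms by auto
  next
    case (step y z) then show ?case using adj_rel_sub by blast
  qed
  thus ?thesis by auto
qed

lemma RA_char:
  assumes mg: "multigraph V E ends" and W: "W \<subseteq> V" and i: "i \<in> W" and j: "j \<in> V" "j \<notin> W"
    and AE: "A \<subseteq> E"
  shows "(adj_rel (V-{j}) ends A)\<^sup>* `` {i} = W \<longleftrightarrow>
    (A \<subseteq> ind_edges E ends W \<union> cross_edges E ends W j \<union> ind_edges E ends (V-W) \<and>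
     (\<forall>y\<in>W. (i,y) \<in> (adj_rel W ends (A \<inter> ind_edges E ends W))\<^sup>*))"
  (is "?L = W \<longleftrightarrow> ?P1 \<and> ?P2")
proof
  assume L: "?L = W"
  have P1: ?P1
  proof
    fix e assume eA: "e \<in> A"
    have eE: "e \<in> E" using eA AE by auto
    note ee = mg_edge[OF mg eE]
    show "e \<in> ind_edges E ends W \<union> cross_edges E ends W j \<union> ind_edges E ends (V-W)"
    proof (cases "\<exists>x\<in>ends e. x \<in> W")
      case True
      then obtain x where x: "x \<in> ends e" "x \<in> W" by auto
      have sub: "ends e \<subseteq> W \<union> {j}"
      proof
        fix y assume y: "y \<in> ends e"
        show "y \<in> W \<union> {j}"
        proof (cases "y = j")
          case False
          have "(x,y) \<in> adj_rel (V-{j}) ends A"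
            using x y False ee W j eA by (intro adj_relI[of _ _ _ e]) auto
          moreover have "(i,x) \<in> (adj_rel (V-{j}) ends A)\<^sup>*" using L x by auto
          ultimately have "y \<in> ?L" by auto
          thus ?thesis using L by auto
        qed auto
      qed
      show ?thesis
      proof (cases "j \<in> ends e")
        case True
        have "ends e = {x, j}" using two_ends[of "ends e" x j] ee x True j by auto
        thus ?thesis using x eE unfolding cross_edges_def by auto
      next
        case False
        thus ?thesis using sub eE unfolding ind_edges_def by auto
      qed
    next
      case False
      thus ?thesis using ee eE unfolding ind_edges_def by auto
    qed
  qed
  have P2: ?P2
  proof
    fix y assume "y \<in> W"
    hence "(i,y) \<in> (adj_rel (V-{j}) ends A)\<^sup>*" unfolding L[symmetric] by simp
    thus "(i,y) \<in> (adj_rel W ends (A \<inter> ind_edges E ends W))\<^sup>*"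
    proof (induction rule: rtrancl_induct)
      case base then show ?case by simp
    next
      case (step y z)
      have yW: "y \<in> W" unfolding L[symmetric] using step.hyps(1) by simp
      have "(i,z) \<in> (adj_rel (V-{j}) ends A)\<^sup>*" using step.hyps by (rule rtrancl_into_rtrancl)
      hence zW: "z \<in> W" unfolding L[symmetric] by simp
      from step.hyps(2) obtain e where e: "e \<in> A" "y \<in> ends e" "z \<in> ends e" by (rule adj_relE)
      have "e \<in> ind_edges E ends W \<union> cross_edges E ends W j \<union> ind_edges E ends (V-W)"
        using P1 e by auto
      moreover
      { assume "e \<in> ind_edges E ends W"
        hence "(y,z) \<in> adj_rel W ends (A \<inter> ind_edges E ends W)"
          using e yW zW by (intro adj_relI[of _ _ _ e]) auto
        hence ?case using step.IH by auto }
      moreover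
      { assume "e \<in> cross_edges E ends W j"
        then obtain w where "ends e = {w,j}" unfolding cross_edges_def by auto
        hence "y = z" using e yW zW j by auto
        hence ?case using step.IH by auto }
      moreover
      { assume "e \<in> ind_edges E ends (V-W)"
        hence False using e yW unfolding ind_edges_def by auto }
      ultimately show ?case by blast
    qed
  qed
  show "?P1 \<and> ?P2" using P1 P2 by blast
next
  assume P: "?P1 \<and> ?P2"
  show "?L = W"
  proof
    show "?L \<subseteq> W"
    proof
      fix y assume "y \<in> ?L"
      hence "(i,y) \<in> (adj_rel (V-{j}) ends A)\<^sup>*" by auto
      thus "y \<in> W"
      proof (induction rule: rtrancl_induct)
        case base then show ?case using i by simp
      next
        case (step y z)
        from step.hyps(2) obtain e where e: "z \<in> V - {j}" "e \<in> A" "y \<in> ends e" "z \<in> ends e"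
          by (rule adj_relE)
        have "e \<in> ind_edges E ends W \<union> cross_edges E ends W j \<union> ind_edges E ends (V-W)"
          using P e by auto
        moreover
        { assume "e \<in> ind_edges E ends W"
          hence ?case using e unfolding ind_edges_def by auto }
        moreover
        { assume "e \<in> cross_edges E ends W j"
          then obtain w where "w \<in> W" "ends e = {w,j}" unfolding cross_edges_def by auto
          hence ?case using e by auto }
        moreover
        { assume "e \<in> ind_edges E ends (V-W)"
          hence ?case using e step.IH unfolding ind_edges_def by auto }
        ultimately show ?case by blast
      qed
    qed
  next
    have "adj_rel W ends (A \<inter> ind_edges E ends W) \<subseteq> adj_rel (V-{j}) ends A"
      by (rule adj_rel_mono) (use W j in auto)
    thus "W \<subseteq> ?L" using P rtrancl_mono by blast
  qed
qed




lemma block_sum: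
  fixes \<phi> :: "nat \<Rightarrow> 'a::comm_ring_1" and w :: "'e \<Rightarrow> 'a"
  assumes mg: "multigraph V E ends" and W: "W \<subseteq> V" and i: "i \<in> W" and j: "j \<in> V" "j \<notin> W"
  shows "(\<Sum>A\<in>{A\<in>Pow E. (adj_rel (V-{j}) ends A)\<^sup>* `` {i} = W}. \<phi> (ncomp V ends A) * (\<Prod>e\<in>A. w e)) =
    Cpoly W (ind_edges E ends W) ends w *
    (\<Sum>A2\<in>Pow (cross_edges E ends W j). \<Sum>A3\<in>Pow (ind_edges E ends (V-W)).
        \<phi> (ncomp (V-W) ends A3 + (if A2 = {} then 1 else 0)) * ((\<Prod>e\<in>A2. w e) * (\<Prod>e\<in>A3. w e)))"
proof -
  define Ein where "Ein = ind_edges E ends W"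
  define Ec where "Ec = cross_edges E ends W j"
  define Eo where "Eo = ind_edges E ends (V-W)"
  define S1 where "S1 = {A1\<in>Pow Ein. \<forall>y\<in>W. (i,y) \<in> (adj_rel W ends A1)\<^sup>*}"
  define F where "F = (\<lambda>(A1::'e set,A2::'e set,A3::'e set). A1 \<union> A2 \<union> A3)"
  have finE: "finite E" using mg unfolding multigraph_def by auto
  have subs: "Ein \<subseteq> E" "Ec \<subseteq> E" "Eo \<subseteq> E"
    unfolding Ein_def Ec_def Eo_def ind_edges_def cross_edges_def by auto
  have fins: "finite Ein" "finite Ec" "finite Eo" using finite_subset[OF subs(1) finE] finite_subset[OF subs(2) finE] finite_subset[OF subs(3) finE] by auto
  have d12: "Ein \<inter> Ec = {}" using j unfolding Ein_def Ec_def ind_edges_def cross_edges_def by auto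
  have d13: "Ein \<inter> Eo = {}"
  proof -
    { fix e assume "e \<in> Ein" "e \<in> Eo"
      hence "e \<in> E" "ends e \<subseteq> W" "ends e \<subseteq> V - W" unfolding Ein_def Eo_def ind_edges_def by auto
      hence False using mg_edge[OF mg] by blast }
    thus ?thesis by blast
  qed
  have d23: "Ec \<inter> Eo = {}" unfolding Eo_def Ec_def ind_edges_def cross_edges_def by auto
  have S1eq: "S1 = {A\<in>Pow Ein. ncomp W ends A = 1}"
    unfolding S1_def using ncomp_one[OF i] by auto
  have setEq: "{A\<in>Pow E. (adj_rel (V-{j}) ends A)\<^sup>* `` {i} = W} = F ` (S1 \<times> Pow Ec \<times> Pow Eo)"
  proof
    show "{A\<in>Pow E. (adj_rel (V-{j}) ends A)\<^sup>* `` {i} = W} \<subseteq> F ` (S1 \<times> Pow Ec \<times> Pow Eo)"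
    proof
      fix A assume "A \<in> {A\<in>Pow E. (adj_rel (V-{j}) ends A)\<^sup>* `` {i} = W}"
      hence AE: "A \<subseteq> E" and L: "(adj_rel (V-{j}) ends A)\<^sup>* `` {i} = W" by auto
      have P: "A \<subseteq> Ein \<union> Ec \<union> Eo" "\<forall>y\<in>W. (i,y) \<in> (adj_rel W ends (A \<inter> Ein))\<^sup>*"
        using RA_char[OF mg W i j AE] L unfolding Ein_def Ec_def Eo_def by auto
      have "A = F (A \<inter> Ein, A \<inter> Ec, A \<inter> Eo)" unfolding F_def using P(1) by auto
      moreover have "(A \<inter> Ein, A \<inter> Ec, A \<inter> Eo) \<in> S1 \<times> Pow Ec \<times> Pow Eo"
        unfolding S1_def using P(2) by auto
      ultimately show "A \<in> F ` (S1 \<times> Pow Ec \<times> Pow Eo)" by blast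
    qed
  next
    show "F ` (S1 \<times> Pow Ec \<times> Pow Eo) \<subseteq> {A\<in>Pow E. (adj_rel (V-{j}) ends A)\<^sup>* `` {i} = W}"
    proof
      fix A assume "A \<in> F ` (S1 \<times> Pow Ec \<times> Pow Eo)"
      then obtain A1 A2 A3 where t: "A1 \<in> S1" "A2 \<subseteq> Ec" "A3 \<subseteq> Eo" and A: "A = A1 \<union> A2 \<union> A3"
        unfolding F_def by auto
      have A1: "A1 \<subseteq> Ein" "\<forall>y\<in>W. (i,y) \<in> (adj_rel W ends A1)\<^sup>*" using t(1) unfolding S1_def by auto
      have AE: "A \<subseteq> E" using A A1 t subs by auto
      have "A \<inter> Ein = A1" using A A1 t d12 d13 by auto
      hence "(adj_rel (V-{j}) ends A)\<^sup>* `` {i} = W"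
        using RA_char[OF mg W i j AE] A A1 t unfolding Ein_def Ec_def Eo_def by auto
      thus "A \<in> {A\<in>Pow E. (adj_rel (V-{j}) ends A)\<^sup>* `` {i} = W}" using AE by auto
    qed
  qed
  have inj: "inj_on F (S1 \<times> Pow Ec \<times> Pow Eo)"
  proof (rule inj_onI)
    fix x y assume x: "x \<in> S1 \<times> Pow Ec \<times> Pow Eo" and y: "y \<in> S1 \<times> Pow Ec \<times> Pow Eo" and eq: "F x = F y"
    obtain a1 a2 a3 where xa: "x = (a1,a2,a3)" by (cases x) auto
    obtain b1 b2 b3 where yb: "y = (b1,b2,b3)" by (cases y) auto
    have sa: "a1 \<subseteq> Ein" "a2 \<subseteq> Ec" "a3 \<subseteq> Eo" using x xa unfolding S1_def by auto
    have sb: "b1 \<subseteq> Ein" "b2 \<subseteq> Ec" "b3 \<subseteq> Eo" using y yb unfolding S1_def by auto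
    have U: "a1 \<union> a2 \<union> a3 = b1 \<union> b2 \<union> b3" using eq xa yb unfolding F_def by simp
    have "a1 = (a1 \<union> a2 \<union> a3) \<inter> Ein" "b1 = (b1 \<union> b2 \<union> b3) \<inter> Ein" using sa sb d12 d13 by auto
    hence 1: "a1 = b1" using U by simp
    have "a2 = (a1 \<union> a2 \<union> a3) \<inter> Ec" "b2 = (b1 \<union> b2 \<union> b3) \<inter> Ec" using sa sb d12 d23 by auto
    hence 2: "a2 = b2" using U by simp
    have "a3 = (a1 \<union> a2 \<union> a3) \<inter> Eo" "b3 = (b1 \<union> b2 \<union> b3) \<inter> Eo" using sa sb d13 d23 by auto
    hence 3: "a3 = b3" using U by simp
    show "x = y" using 1 2 3 xa yb by simp
  qed
  let ?g = "\<lambda>A. \<phi> (ncomp V ends A) * (\<Prod>e\<in>A. w e)"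
  let ?h = "\<lambda>A2 A3. \<phi> (ncomp (V-W) ends A3 + (if A2 = {} then 1 else 0)) * ((\<Prod>e\<in>A2. w e) * (\<Prod>e\<in>A3. w e))"
  have "(\<Sum>A\<in>{A\<in>Pow E. (adj_rel (V-{j}) ends A)\<^sup>* `` {i} = W}. ?g A) = (\<Sum>x\<in>S1 \<times> Pow Ec \<times> Pow Eo. ?g (F x))"
    unfolding setEq by (rule sum.reindex[OF inj, unfolded comp_def])
  also have "\<dots> = (\<Sum>A1\<in>S1. \<Sum>p\<in>Pow Ec \<times> Pow Eo. ?g (F (A1, p)))"
    by (simp add: sum.cartesian_product split_def)
  also have "\<dots> = (\<Sum>A1\<in>S1. (\<Prod>e\<in>A1. w e) * (\<Sum>p\<in>Pow Ec \<times> Pow Eo. ?h (fst p) (snd p)))"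
  proof (rule sum.cong[OF refl])
    fix A1 assume A1: "A1 \<in> S1"
    have A1': "A1 \<subseteq> Ein" "\<forall>y\<in>W. (i,y) \<in> (adj_rel W ends A1)\<^sup>*" using A1 unfolding S1_def by auto
    show "(\<Sum>p\<in>Pow Ec \<times> Pow Eo. ?g (F (A1, p))) = (\<Prod>e\<in>A1. w e) * (\<Sum>p\<in>Pow Ec \<times> Pow Eo. ?h (fst p) (snd p))"
      unfolding sum_distrib_left
    proof (rule sum.cong[OF refl])
      fix p assume p: "p \<in> Pow Ec \<times> Pow Eo"
      obtain A2 A3 where pa: "p = (A2, A3)" by (cases p) auto
      have s: "A2 \<subseteq> Ec" "A3 \<subseteq> Eo" using p pa by auto
      have fA: "finite A1" "finite A2" "finite A3" using finite_subset[OF A1'(1) fins(1)] finite_subset[OF s(1) fins(2)] finite_subset[OF s(2) fins(3)] by auto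
      have nc: "ncomp V ends (A1 \<union> A2 \<union> A3) = ncomp (V-W) ends A3 + (if A2 = {} then 1 else 0)"
        by (rule ncomp_split[OF mg W j i]) (use A1' s in \<open>auto simp: Ein_def Ec_def Eo_def\<close>)
      have "(\<Prod>e\<in>A1 \<union> A2 \<union> A3. w e) = (\<Prod>e\<in>A1 \<union> A2. w e) * (\<Prod>e\<in>A3. w e)"
        by (rule prod.union_disjoint) (use fA s A1' d13 d23 in auto)
      also have "(\<Prod>e\<in>A1 \<union> A2. w e) = (\<Prod>e\<in>A1. w e) * (\<Prod>e\<in>A2. w e)"
        by (rule prod.union_disjoint) (use fA s A1' d12 in auto)
      finally have pr: "(\<Prod>e\<in>A1 \<union> A2 \<union> A3. w e) = (\<Prod>e\<in>A1. w e) * ((\<Prod>e\<in>A2. w e) * (\<Prod>e\<in>A3. w e))"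
        by (simp add: mult.assoc)
      show "?g (F (A1, p)) = (\<Prod>e\<in>A1. w e) * ?h (fst p) (snd p)"
        unfolding pa F_def using nc pr by (simp add: mult_ac)
    qed
  qed
  also have "\<dots> = (\<Sum>A1\<in>S1. \<Prod>e\<in>A1. w e) * (\<Sum>p\<in>Pow Ec \<times> Pow Eo. ?h (fst p) (snd p))"
    by (simp add: sum_distrib_right)
  also have "(\<Sum>p\<in>Pow Ec \<times> Pow Eo. ?h (fst p) (snd p)) = (\<Sum>A2\<in>Pow Ec. \<Sum>A3\<in>Pow Eo. ?h A2 A3)"
    by (simp add: sum.cartesian_product case_prod_beta')
  also have "(\<Sum>A1\<in>S1. \<Prod>e\<in>A1. w e) = Cpoly W (ind_edges E ends W) ends w"
    unfolding Cpoly_def S1eq Ein_def ..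
  finally show ?thesis unfolding Ec_def Eo_def .
qed




lemma general:
  fixes \<phi> :: "nat \<Rightarrow> 'a::comm_ring_1" and w :: "'e \<Rightarrow> 'a"
  assumes mg: "multigraph V E ends" and i: "i \<in> V" and j: "j \<in> V" and ij: "i \<noteq> j"
  shows "(\<Sum>A\<in>Pow E. \<phi> (ncomp V ends A) * (\<Prod>e\<in>A. w e)) =
    (\<Sum>W\<in>{W. W \<subseteq> V \<and> i \<in> W \<and> j \<notin> W}. Cpoly W (ind_edges E ends W) ends w *
    (\<Sum>A2\<in>Pow (cross_edges E ends W j). \<Sum>A3\<in>Pow (ind_edges E ends (V-W)).
        \<phi> (ncomp (V-W) ends A3 + (if A2 = {} then 1 else 0)) * ((\<Prod>e\<in>A2. w e) * (\<Prod>e\<in>A3. w e))))"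
proof -
  have finE: "finite E" and finV: "finite V" using mg unfolding multigraph_def by auto
  have finW: "finite {W. W \<subseteq> V \<and> i \<in> W \<and> j \<notin> W}"
    by (rule finite_subset[of _ "Pow V"]) (use finV in auto)
  have img: "(\<lambda>A. (adj_rel (V-{j}) ends A)\<^sup>* `` {i}) ` Pow E \<subseteq> {W. W \<subseteq> V \<and> i \<in> W \<and> j \<notin> W}"
    using RA_mem[OF i ij] by blast
  have "(\<Sum>A\<in>Pow E. \<phi> (ncomp V ends A) * (\<Prod>e\<in>A. w e)) =
     (\<Sum>W\<in>{W. W \<subseteq> V \<and> i \<in> W \<and> j \<notin> W}.
        \<Sum>A\<in>{A. A \<in> Pow E \<and> (adj_rel (V-{j}) ends A)\<^sup>* `` {i} = W}. \<phi> (ncomp V ends A) * (\<Prod>e\<in>A. w e))"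
    by (rule sum.group[symmetric, OF _ finW img]) (use finE in auto)
  show ?thesis
    unfolding \<open>(\<Sum>A\<in>Pow E. _) = _\<close>
  proof (rule sum.cong[OF refl])
    fix W assume "W \<in> {W. W \<subseteq> V \<and> i \<in> W \<and> j \<notin> W}"
    hence W: "W \<subseteq> V" "i \<in> W" "j \<notin> W" by auto
    show "(\<Sum>A\<in>{A. A \<in> Pow E \<and> (adj_rel (V-{j}) ends A)\<^sup>* `` {i} = W}. \<phi> (ncomp V ends A) * (\<Prod>e\<in>A. w e)) =
      Cpoly W (ind_edges E ends W) ends w *
    (\<Sum>A2\<in>Pow (cross_edges E ends W j). \<Sum>A3\<in>Pow (ind_edges E ends (V-W)).
        \<phi> (ncomp (V-W) ends A3 + (if A2 = {} then 1 else 0)) * ((\<Prod>e\<in>A2. w e) * (\<Prod>e\<in>A3. w e)))"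
      using block_sum[OF mg W(1) W(2) j W(3), of \<phi> w] by simp
  qed
qed




lemma pow_sum: fixes w :: "'e \<Rightarrow> 'a::comm_ring_1" assumes "finite X"
  shows "(\<Sum>A\<in>Pow X. \<Prod>e\<in>A. w e) = (\<Prod>e\<in>X. 1 + w e)"
  using prod_add[OF assms, of w "\<lambda>_. 1"] by (simp add: add.commute)

lemma sum_if_empty: fixes w :: "'e \<Rightarrow> 'a::comm_ring_1" assumes "finite X"
  shows "(\<Sum>A\<in>Pow X. (if A = {} then c else 1) * (\<Prod>e\<in>A. w e)) = c - 1 + (\<Prod>e\<in>X. 1 + w e)"
proof -
  have "(\<Sum>A\<in>Pow X. (if A = {} then c else 1) * (\<Prod>e\<in>A. w e)) =
        (\<Sum>A\<in>Pow X. (\<Prod>e\<in>A. w e) + (if {} = A then c - 1 else 0))"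
    by (rule sum.cong) auto
  also have "\<dots> = (\<Sum>A\<in>Pow X. \<Prod>e\<in>A. w e) + (c - 1)"
    using assms by (simp add: sum.distrib)
  finally show ?thesis using pow_sum[OF assms, of w] by simp
qed

lemma Cp_alt: fixes w :: "'e \<Rightarrow> 'a::comm_ring_1" assumes "finite E"
  shows "Cpoly V E ends w = (\<Sum>A\<in>Pow E. (if ncomp V ends A = 1 then 1 else 0) * (\<Prod>e\<in>A. w e))"
proof -
  have "Cpoly V E ends w = (\<Sum>A\<in>Pow E. if ncomp V ends A = 1 then (\<Prod>e\<in>A. w e) else 0)"
    unfolding Cpoly_def by (rule sum.inter_filter) (use assms in simp)
  also have "\<dots> = (\<Sum>A\<in>Pow E. (if ncomp V ends A = 1 then 1 else 0) * (\<Prod>e\<in>A. w e))"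
    by (rule sum.cong) auto
  finally show ?thesis .
qed

theorem theorem4p1:
  fixes V :: "'v set" and E :: "'e set" and ends :: "'e \<Rightarrow> 'v set"
    and q :: "'a::comm_ring_1" and w :: "'e \<Rightarrow> 'a" and i j :: 'v
  assumes "multigraph V E ends" and "i \<in> V" and "j \<in> V" and "i \<noteq> j"
  shows "(Zpoly V E ends q w =
           (\<Sum>W\<in>{W. W \<subseteq> V \<and> i \<in> W \<and> j \<notin> W}.
              (q - 1 + (\<Prod>e\<in>cross_edges E ends W j. 1 + w e))
              * Cpoly W (ind_edges E ends W) ends w
              * Zpoly (V - W) (ind_edges E ends (V - W)) ends q w)) \<and>
         (Cpoly V E ends w =
           (\<Sum>W\<in>{W. W \<subseteq> V \<and> i \<in> W \<and> j \<notin> W}.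
              ((\<Prod>e\<in>cross_edges E ends W j. 1 + w e) - 1)
              * Cpoly W (ind_edges E ends W) ends w
              * Cpoly (V - W) (ind_edges E ends (V - W)) ends w))"
proof
  note mg = assms(1)
  have finE: "finite E" and finV: "finite V" using mg unfolding multigraph_def by auto
  have finc: "finite (cross_edges E ends W j)" for W
    by (rule finite_subset[OF _ finE]) (auto simp: cross_edges_def)
  have fini: "finite (ind_edges E ends W)" for W
    by (rule finite_subset[OF _ finE]) (auto simp: ind_edges_def)
  show "Zpoly V E ends q w =
           (\<Sum>W\<in>{W. W \<subseteq> V \<and> i \<in> W \<and> j \<notin> W}.
              (q - 1 + (\<Prod>e\<in>cross_edges E ends W j. 1 + w e))
              * Cpoly W (ind_edges E ends W) ends w
              * Zpoly (V - W) (ind_edges E ends (V - W)) ends q w)"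
    unfolding Zpoly_def general[OF assms, of "\<lambda>k. q ^ k" w]
  proof (rule sum.cong[OF refl])
    fix W assume "W \<in> {W. W \<subseteq> V \<and> i \<in> W \<and> j \<notin> W}"
    let ?C = "cross_edges E ends W j" and ?O = "ind_edges E ends (V-W)"
    have "(\<Sum>A2\<in>Pow ?C. \<Sum>A3\<in>Pow ?O.
        q ^ (ncomp (V-W) ends A3 + (if A2 = {} then 1 else 0)) * ((\<Prod>e\<in>A2. w e) * (\<Prod>e\<in>A3. w e))) =
       (\<Sum>A2\<in>Pow ?C. \<Sum>A3\<in>Pow ?O. ((if A2 = {} then q else 1) * (\<Prod>e\<in>A2. w e)) *
           (q ^ ncomp (V-W) ends A3 * (\<Prod>e\<in>A3. w e)))"
      by (intro sum.cong refl) (auto simp: mult_ac)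
    also have "\<dots> = (\<Sum>A2\<in>Pow ?C. (if A2 = {} then q else 1) * (\<Prod>e\<in>A2. w e)) *
        (\<Sum>A3\<in>Pow ?O. q ^ ncomp (V-W) ends A3 * (\<Prod>e\<in>A3. w e))"
      by (rule sum_product[symmetric])
    also have "\<dots> = (q - 1 + (\<Prod>e\<in>?C. 1 + w e)) * (\<Sum>A3\<in>Pow ?O. q ^ ncomp (V-W) ends A3 * (\<Prod>e\<in>A3. w e))"
      using sum_if_empty[OF finc, of q w] by simp
    finally show "Cpoly W (ind_edges E ends W) ends w *
       (\<Sum>A2\<in>Pow ?C. \<Sum>A3\<in>Pow ?O.
        q ^ (ncomp (V-W) ends A3 + (if A2 = {} then 1 else 0)) * ((\<Prod>e\<in>A2. w e) * (\<Prod>e\<in>A3. w e))) =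
      (q - 1 + (\<Prod>e\<in>?C. 1 + w e)) * Cpoly W (ind_edges E ends W) ends w *
      (\<Sum>A\<in>Pow ?O. q ^ ncomp (V - W) ends A * (\<Prod>e\<in>A. w e))"
      by (simp add: mult_ac)
  qed
next
  note mg = assms(1)
  have finE: "finite E" and finV: "finite V" using mg unfolding multigraph_def by auto
  have finc: "finite (cross_edges E ends W j)" for W
    by (rule finite_subset[OF _ finE]) (auto simp: cross_edges_def)
  have fini: "finite (ind_edges E ends W)" for W
    by (rule finite_subset[OF _ finE]) (auto simp: ind_edges_def)
  have Cp: "Cpoly V E ends w = (\<Sum>A\<in>Pow E. (if ncomp V ends A = 1 then 1 else 0) * (\<Prod>e\<in>A. w e))"
    by (rule Cp_alt[OF finE])
  show "Cpoly V E ends w =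
           (\<Sum>W\<in>{W. W \<subseteq> V \<and> i \<in> W \<and> j \<notin> W}.
              ((\<Prod>e\<in>cross_edges E ends W j. 1 + w e) - 1)
              * Cpoly W (ind_edges E ends W) ends w
              * Cpoly (V - W) (ind_edges E ends (V - W)) ends w)"
    unfolding Cp general[OF assms, of "\<lambda>k. if k = 1 then 1 else 0" w]
  proof (rule sum.cong[OF refl])
    fix W assume "W \<in> {W. W \<subseteq> V \<and> i \<in> W \<and> j \<notin> W}"
    hence jU: "j \<in> V - W" using assms(3) by auto
    let ?C = "cross_edges E ends W j" and ?O = "ind_edges E ends (V-W)"
    have pos: "ncomp (V-W) ends A3 \<ge> 1" for A3
      by (rule ncomp_pos) (use finV jU in auto)
    have "(\<Sum>A2\<in>Pow ?C. \<Sum>A3\<in>Pow ?O.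
        (if ncomp (V-W) ends A3 + (if A2 = {} then 1 else 0) = 1 then 1 else 0) * ((\<Prod>e\<in>A2. w e) * (\<Prod>e\<in>A3. w e))) =
       (\<Sum>A2\<in>Pow ?C. \<Sum>A3\<in>Pow ?O. ((if A2 = {} then 0 else 1) * (\<Prod>e\<in>A2. w e)) *
           ((if ncomp (V-W) ends A3 = 1 then 1 else 0) * (\<Prod>e\<in>A3. w e)))"
    proof (intro sum.cong refl)
      fix A2 A3
      show "(if ncomp (V-W) ends A3 + (if A2 = {} then 1 else 0) = 1 then 1 else 0) * ((\<Prod>e\<in>A2. w e) * (\<Prod>e\<in>A3. w e)) =
        ((if A2 = {} then 0 else 1) * (\<Prod>e\<in>A2. w e)) *
           ((if ncomp (V-W) ends A3 = 1 then (1::'a) else 0) * (\<Prod>e\<in>A3. w e))"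
        using pos[of A3] by (cases "A2 = {}") auto
    qed
    also have "\<dots> = (\<Sum>A2\<in>Pow ?C. (if A2 = {} then 0 else 1) * (\<Prod>e\<in>A2. w e)) *
        (\<Sum>A3\<in>Pow ?O. (if ncomp (V-W) ends A3 = 1 then 1 else 0) * (\<Prod>e\<in>A3. w e))"
      by (rule sum_product[symmetric])
    also have "\<dots> = ((\<Prod>e\<in>?C. 1 + w e) - 1) * Cpoly (V-W) ?O ends w"
      using sum_if_empty[OF finc, of 0 w] Cp_alt[OF fini, of "V-W" "V-W" ends w] by simp
    finally show "Cpoly W (ind_edges E ends W) ends w *
       (\<Sum>A2\<in>Pow ?C. \<Sum>A3\<in>Pow ?O.
        (if ncomp (V-W) ends A3 + (if A2 = {} then 1 else 0) = 1 then 1 else 0) * ((\<Prod>e\<in>A2. w e) * (\<Prod>e\<in>A3. w e))) =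
      ((\<Prod>e\<in>?C. 1 + w e) - 1) * Cpoly W (ind_edges E ends W) ends w * Cpoly (V - W) ?O ends w"
      by (simp add: mult_ac)
  qed
qed


end
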